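(* Let $f_i:\mathbb{R}^{n_{i-1}}\to\mathbb{R}^{n_i}$ and $g_i:\mathbb{R}^{n_i}\to\mathbb{R}^{n_{i-1}}$, let $\mathbf{h}_{i-1}\in\mathbb{R}^{n_{i-1}}$ and $\mathbf{h}_i=f_i(\mathbf{h}_{i-1})$. For a target $\hat{\mathbf{h}}_i\in\mathbb{R}^{n_i}$, define the difference-target-propagation target of layer $i-1$ by $$\hat{\mathbf{h}}_{i-1}=\mathbf{h}_{i-1}+g_i(\hat{\mathbf{h}}_i)-g_i(\mathbf{h}_i).$$ Assume $f_i$ is differentiable at $\mathbf{h}_{i-1}$ with Jacobian $J_{f_i}$ and $g_i$ is differentiable at $\mathbf{h}_i$ with Jacobian $J_{g_i}$, and that the largest eigenvalue of $(I-J_{f_i}J_{g_i})^T(I-J_{f_i}J_{g_i})$ is less than $1$. Then, if $\hat{\mathbf{h}}_i-\mathbf{h}_i$ is sufficiently small (and nonzero), i.e. there is $\delta>0$ such that for every $\hat{\mathbf{h}}_i$ with $0<\|\hat{\mathbf{h}}_i-\mathbf{h}_i\|_2<\delta$, $$\|\hat{\mathbf{h}}_i-f_i(\hat{\mathbf{h}}_{i-1})\|_2^2<\|\hat{\mathbf{h}}_i-\mathbf{h}_i\|_2^2.$$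
   Context: In a layered network $\mathbf{h}_i=f_i(\mathbf{h}_{i-1})$, $g_i$ is a learned feedback map meant to approximately invert $f_i$; $\hat{\mathbf{h}}_i$ is a target value for layer $i$. *)

theory Defs
  imports "HOL-Analysis.Analysis"
begin

definition matrix_eigenvalue :: "real^'n^'n \<Rightarrow> real \<Rightarrow> bool" where
  "matrix_eigenvalue M l \<longleftrightarrow> (\<exists>v. v \<noteq> 0 \<and> M *v v = l *\<^sub>R v)"

definition largest_eigenvalue :: "real^'n^'n \<Rightarrow> real" where
  "largest_eigenvalue M = Max {l. matrix_eigenvalue M l}"

end

theory Submission imports Defs begin

lemma MA_inner:
  fixes A :: "real^'n^'n"
  shows "inner ((transpose A ** A) *v y) x = inner (A *v y) (A *v x)"
  by (metis dot_lmul_matrix matrix_vector_mul_assoc transpose_matrix_vector)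

lemma quad_zero:
  fixes b c :: real
  assumes "c \<ge> 0" "\<And>t. 2*t*b + t^2*c \<ge> 0"
  shows "b = 0"
proof (rule ccontr)
  assume nz: "b \<noteq> 0"
  define t where "t = - b/(c+1)"
  have "2*t*b + t^2*c = b^2 * (-(c+2)) / (c+1)^2"
  proof -
    have p: "c+1 > 0" using assms(1) by simp
    show ?thesis unfolding t_def using p
      by (simp add: divide_simps power2_eq_square) (simp add: algebra_simps)
  qed
  also have "\<dots> < 0" using nz assms(1)
    by (intro divide_neg_pos mult_pos_neg) auto
  finally show False using assms(2)[of t] by linarith
qed

lemma max_attained:
  fixes A :: "real^'n^'n"
  obtains v0 where "norm v0 = 1" "\<And>v. norm v = 1 \<Longrightarrow> (norm (A *v v))^2 \<le> (norm (A *v v0))^2"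
proof -
  have "compact (sphere (0::real^'n) 1)" by simp
  moreover have "sphere (0::real^'n) 1 \<noteq> {}"
    by (simp add: sphere_def) (metis norm_axis_1)
  moreover have "continuous_on (sphere 0 1) (\<lambda>v. (norm (A *v v))^2)"
    by (intro continuous_intros continuous_on_compose2[OF _ matrix_vector_mult_linear_continuous_on]) auto
  ultimately obtain v0 where "v0 \<in> sphere 0 1" "\<forall>v\<in>sphere 0 1. (norm (A *v v))^2 \<le> (norm (A *v v0))^2"
    using continuous_attains_sup by blast
  then show ?thesis by (intro that[of v0]) auto
qed

lemma key_bound:
  fixes A :: "real^'n^'n"
  assumes eig: "largest_eigenvalue (transpose A ** A) < 1"
  shows "\<exists>c. 0 \<le> c \<and> c < 1 \<and> (\<forall>v. norm (A *v v) \<le> c * norm v)"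
proof -
  define M where "M = transpose A ** A"
  obtain v0 where v0: "norm v0 = 1" "\<And>v. norm v = 1 \<Longrightarrow> (norm (A *v v))^2 \<le> (norm (A *v v0))^2"
    using max_attained[of A] by metis
  define \<mu> where "\<mu> = (norm (A *v v0))^2"
  have bnd: "(norm (A *v v))^2 \<le> \<mu> * (norm v)^2" for v
  proof (cases "v = 0")
    case True then show ?thesis by simp
  next
    case False
    define u where "u = (1/norm v) *\<^sub>R v"
    have nu: "norm u = 1" using False by (simp add: u_def)
    have Au: "A *v u = (1/norm v) *\<^sub>R (A *v v)" by (simp add: u_def matrix_vector_mult_scaleR)
    have "(norm (A *v v))^2 / (norm v)^2 = (norm (A *v u))^2"
      using False by (simp add: Au power_divide)
    also have "\<dots> \<le> \<mu>" using v0(2)[OF nu] by (simp add: \<mu>_def)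
    finally show ?thesis using False by (simp add: divide_le_eq)
  qed
  have mu0: "\<mu> \<ge> 0" by (simp add: \<mu>_def)
  define B where "B x y = \<mu> * inner x y - inner (A *v x) (A *v y)" for x y
  have Bpos: "B x x \<ge> 0" for x
    using bnd[of x] by (simp add: B_def power2_norm_eq_inner)
  have Bsym: "B x y = B y x" for x y by (simp add: B_def inner_commute)
  have B00: "B v0 v0 = 0"
  proof -
    have "inner v0 v0 = 1" using v0(1) by (metis norm_eq_sqrt_inner real_sqrt_eq_1_iff)
    then show ?thesis by (simp add: B_def \<mu>_def power2_norm_eq_inner)
  qed
  have Bexp: "B (v0 + t *\<^sub>R y) (v0 + t *\<^sub>R y) = B v0 v0 + 2*t*B v0 y + t^2 * B y y" for t y
    unfolding B_def by (simp add: matrix_vector_right_distrib matrix_vector_mult_scaleR inner_add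
        inner_commute algebra_simps power2_eq_square)
  have B0y: "B v0 y = 0" for y
  proof (rule quad_zero[OF Bpos])
    fix t show "0 \<le> 2 * t * B v0 y + t^2 * B y y" using Bpos[of "v0 + t *\<^sub>R y"] Bexp[of t y] B00 by simp
  qed
  define r where "r = \<mu> *\<^sub>R v0 - M *v v0"
  have "inner r y = B v0 y" for y
    unfolding r_def B_def M_def by (simp add: inner_diff_left MA_inner)
  then have "inner r r = 0" using B0y by simp
  then have "r = 0" by simp
  then have Mv0: "M *v v0 = \<mu> *\<^sub>R v0" by (simp add: r_def)
  have v0nz: "v0 \<noteq> 0" using v0(1) by auto
  have mu_eig: "matrix_eigenvalue M \<mu>"
    unfolding matrix_eigenvalue_def using Mv0 v0nz by blast
  have le: "l \<le> \<mu>" if "matrix_eigenvalue M l" for l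
  proof -
    from that obtain v where v: "v \<noteq> 0" "M *v v = l *\<^sub>R v" unfolding matrix_eigenvalue_def by auto
    have "l * (norm v)^2 = inner (M *v v) v" using v(2) by (simp only: inner_scaleR_left power2_norm_eq_inner)
    also have "\<dots> = (norm (A *v v))^2" unfolding M_def MA_inner power2_norm_eq_inner ..
    also have "\<dots> \<le> \<mu> * (norm v)^2" by (rule bnd)
    finally have "l * (norm v)^2 \<le> \<mu> * (norm v)^2" .
    moreover have "(norm v)^2 > 0" using v(1) by (metis zero_less_norm_iff zero_less_power)
    ultimately show ?thesis by (metis mult_le_cancel_right_pos)
  qed
  define S where "S = {l. matrix_eigenvalue M l}"
  define e where "e l = (SOME v. v \<noteq> 0 \<and> M *v v = l *\<^sub>R v)" for l
  have e: "e l \<noteq> 0 \<and> M *v e l = l *\<^sub>R e l" if "l \<in> S" for l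
  proof -
    have "\<exists>v. v \<noteq> 0 \<and> M *v v = l *\<^sub>R v" using that by (simp add: S_def matrix_eigenvalue_def)
    then show ?thesis unfolding e_def by (rule someI_ex)
  qed
  have e1: "e l \<noteq> 0" and e2: "M *v e l = l *\<^sub>R e l" if "l \<in> S" for l
    using e[OF that] by auto
  have inj: "inj_on e S"
  proof (rule inj_onI)
    fix a b assume ab: "a \<in> S" "b \<in> S" "e a = e b"
    have "a *\<^sub>R e a = M *v e a" by (rule e2[OF ab(1), symmetric])
    also have "\<dots> = M *v e b" by (simp only: ab(3))
    also have "\<dots> = b *\<^sub>R e b" by (rule e2[OF ab(2)])
    also have "\<dots> = b *\<^sub>R e a" by (simp only: ab(3))
    finally have "(a - b) *\<^sub>R e a = 0" by (simp add: scaleR_diff_left)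
    then show "a = b" using e1[OF ab(1)] by simp
  qed
  have orth: "pairwise orthogonal (e ` S)"
    unfolding pairwise_def
  proof (intro ballI impI)
    fix x y assume xy: "x \<in> e ` S" "y \<in> e ` S" "x \<noteq> y"
    then obtain a b where ab: "a \<in> S" "b \<in> S" "x = e a" "y = e b" by blast
    then have anb: "a \<noteq> b" using xy(3) by auto
    have "a * inner (e a) (e b) = inner (M *v e a) (e b)" by (simp only: e2[OF ab(1)] inner_scaleR_left)
    also have "\<dots> = inner (M *v e b) (e a)" unfolding M_def MA_inner by (rule inner_commute)
    also have "\<dots> = b * inner (e a) (e b)" by (simp add: e2[OF ab(2)] inner_commute)
    finally have "(a - b) * inner (e a) (e b) = 0" by (simp add: algebra_simps)
    then show "orthogonal x y" using anb ab by (simp add: orthogonal_def)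
  qed
  have "0 \<notin> e ` S" using e by auto
  then have "finite (e ` S)" using orth pairwise_orthogonal_independent independent_imp_finite by blast
  then have finS: "finite S" using inj finite_imageD by blast
  have "Max S = \<mu>"
    using finS mu_eig le by (intro Max_eqI) (auto simp: S_def)
  then have mu1: "\<mu> < 1" using eig by (simp add: largest_eigenvalue_def S_def M_def)
  show ?thesis
  proof (intro exI conjI allI)
    show "0 \<le> sqrt \<mu>" using mu0 by simp
    show "sqrt \<mu> < 1" using mu1 mu0 by simp
    fix v
    have "norm (A *v v) = sqrt ((norm (A *v v))^2)" by simp
    also have "\<dots> \<le> sqrt (\<mu> * (norm v)^2)" using bnd by (rule real_sqrt_le_mono)
    also have "\<dots> = sqrt \<mu> * norm v" by (simp add: real_sqrt_mult)
    finally show "norm (A *v v) \<le> sqrt \<mu> * norm v" .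
  qed
qed

theorem theorem2:
  fixes f :: "real^'m \<Rightarrow> real^'n" and g :: "real^'n \<Rightarrow> real^'m"
    and h :: "real^'m"
    and Jf :: "real^'m^'n" and Jg :: "real^'n^'m"
  assumes df: "(f has_derivative (\<lambda>x. Jf *v x)) (at h)"
    and dg: "(g has_derivative (\<lambda>y. Jg *v y)) (at (f h))"
    and eig: "largest_eigenvalue
               (transpose (mat 1 - Jf ** Jg) ** (mat 1 - Jf ** Jg)) < 1"
  shows "\<exists>\<delta>>0. \<forall>ht :: real^'n.
           0 < norm (ht - f h) \<and> norm (ht - f h) < \<delta> \<longrightarrow>
           (norm (ht - f (h + g ht - g (f h))))\<^sup>2 < (norm (ht - f h))\<^sup>2"
proof -
  define A where "A = mat 1 - Jf ** Jg"
  obtain c where c: "0 \<le> c" "c < 1" "\<And>v. norm (A *v v) \<le> c * norm v"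
    using key_bound[OF eig[folded A_def]] by blast
  define y where "y = f h"
  define \<phi> where "\<phi> ht = h + g ht - g y" for ht
  define \<psi> where "\<psi> ht = ht - f (\<phi> ht)" for ht
  have \<phi>y: "\<phi> y = h" by (simp add: \<phi>_def)
  have d\<phi>: "(\<phi> has_derivative (\<lambda>d. Jg *v d)) (at y)"
    unfolding \<phi>_def
    using has_derivative_diff[OF has_derivative_add[OF has_derivative_const dg[folded y_def]] has_derivative_const]
    by simp
  have df': "(f has_derivative (\<lambda>x. Jf *v x)) (at (\<phi> y))" using df \<phi>y by simp
  have dcomp: "((f \<circ> \<phi>) has_derivative ((\<lambda>x. Jf *v x) \<circ> (\<lambda>d. Jg *v d))) (at y)"
    by (rule diff_chain_at[OF d\<phi> df'])
  have d\<psi>0: "(\<psi> has_derivative (\<lambda>d. d - ((\<lambda>x. Jf *v x) \<circ> (\<lambda>d. Jg *v d)) d)) (at y)"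
    unfolding \<psi>_def using has_derivative_diff[OF has_derivative_ident dcomp] by (simp add: o_def)
  have Deq: "(\<lambda>d. d - ((\<lambda>x. Jf *v x) \<circ> (\<lambda>d. Jg *v d)) d) = (\<lambda>d. A *v d)"
    by (rule ext) (simp add: A_def matrix_vector_mul_assoc matrix_vector_mult_diff_rdistrib)
  have d\<psi>: "(\<psi> has_derivative (\<lambda>d. A *v d)) (at y)" using d\<psi>0 Deq by simp
  define e where "e = (1 - c) / 2"
  have e0: "e > 0" using c by (simp add: e_def)
  obtain \<delta> where \<delta>: "\<delta> > 0" "\<And>x. norm (x - y) < \<delta> \<Longrightarrow> norm (\<psi> x - \<psi> y - A *v (x - y)) \<le> e * norm (x - y)"
    using d\<psi> e0 unfolding has_derivative_at_alt by blast
  have \<psi>y: "\<psi> y = 0" unfolding \<psi>_def \<phi>y by (simp add: y_def)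
  show ?thesis
  proof (intro exI conjI allI impI)
    show "\<delta> > 0" by (rule \<delta>(1))
    fix ht :: "real^'n"
    assume H: "0 < norm (ht - f h) \<and> norm (ht - f h) < \<delta>"
    have "norm (\<psi> ht) \<le> norm (A *v (ht - y)) + norm (\<psi> ht - A *v (ht - y))"
      by (metis add.commute diff_add_cancel norm_triangle_ineq)
    also have "\<dots> \<le> c * norm (ht - y) + e * norm (ht - y)"
      using c(3)[of "ht - y"] \<delta>(2)[of ht] H \<psi>y by (simp add: y_def)
    also have "\<dots> < norm (ht - y)"
      using H c by (simp add: y_def e_def field_simps)
    finally have lt: "norm (\<psi> ht) < norm (ht - y)" .
    have "(norm (\<psi> ht))^2 < (norm (ht - y))^2"
      by (rule power_strict_mono[OF lt]) auto
    then show "(norm (ht - f (h + g ht - g (f h))))\<^sup>2 < (norm (ht - f h))\<^sup>2"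
      by (simp add: \<psi>_def \<phi>_def y_def)
  qed
qed

end
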